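(* Let $\mathbb V$ be the 2-vector space of a 2-term complex $V_1\xrightarrow{\mathrm d}V_0$ and $\mu=(\mu_0,\mu_1,\mu_2)$ an isomorphism of Lie 2-algebras $\mathfrak{gl}(\mathbb V)\to\mathfrak{gl}(\mathbb V)$. For objects $e_1=A+u$, $e_2=B+v$, $e_3=C+w$ of $\mathfrak{gl}(\mathbb V)\oplus\mathbb V$, set $J_{e_1,e_2,e_3}=[[A,B],C]+\mu_2(A,B)(w)$, where $[[A,B],C]$ denotes the identity morphism of $[[A,B],C]$ in $\mathfrak{gl}(\mathbb V)$ and $\mu_2(A,B)(w)$ is the action of the morphism $\mu_2(A,B)$ on the identity morphism of $w$. Then $J_{e_1,e_2,e_3}$ is a morphism from $\{\{e_1,e_2\}_\mu,e_3\}_\mu$ to $\{e_1,\{e_2,e_3\}_\mu\}_\mu-\{e_2,\{e_1,e_3\}_\mu\}_\mu$, and $J$ is a natural transformation between these two trilinear functors.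
   Context: All vector spaces are finite-dimensional over $\mathbb R$. A 2-vector space is a category internal to vector spaces. For a 2-term complex $V_1\xrightarrow{\mathrm d}V_0$, $\mathbb V$ has objects $V_0$, morphisms $V_0\oplus V_1$ ($u+m$), $s(u+m)=u$, $t(u+m)=u+\mathrm dm$, composition $(u+m)\cdot(u+\mathrm dm+n)=u+m+n$. Let $\mathrm{End}^0_{\mathrm d}(\mathbb V)=\{A=(A_0,A_1):A_0\mathrm d=\mathrm dA_1\}$, $\mathrm{End}^1(\mathbb V)=\mathrm{Hom}(V_0,V_1)$, $\delta\phi=(\mathrm d\phi,\phi\mathrm d)$; brackets $[A,B]$ componentwise commutator, $[A,\phi]=-[\phi,A]=A_1\phi-\phi A_0$, $[\phi,\psi]_\delta=\phi\mathrm d\psi-\psi\mathrm d\phi$. The strict Lie 2-algebra $\mathfrak{gl}(\mathbb V)$ has objects $\mathrm{End}^0_{\mathrm d}(\mathbb V)$, morphisms $A+\phi$, $s(A+\phi)=A$, $t(A+\phi)=A+\delta\phi$, bracket $[A+\phi,B+\psi]=[A,B]+[\phi,\psi]_\delta+[A,\psi]+[\phi,B]$, and acts on $\mathbb V$ by $A(u)=A_0u$, $(A+\phi)(u+m)=A_0u+(A_1m+\phi(u+\mathrm dm))$. A Lie 2-algebra is a 2-vector space $C$ with a skew-symmetric bilinear functor $[\cdot,\cdot]$ and a skew-symmetric trilinear natural isomorphism (Jacobiator) $J_{x,y,z}:[[x,y],z]\to[x,[y,z]]+[[x,z],y]$ satisfying the Jacobiator identity $J_{[w,x],y,z}([J_{w,x,z},y]+1)(J_{w,[x,z],y}+J_{[w,z],x,y}+J_{w,x,[y,z]})=[J_{w,x,y},z](J_{[w,y],x,z}+J_{w,[x,y],z})([J_{w,y,z},x]+1)([w,J_{x,y,z}]+1)$;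 it is strict when $J$ is the identity. A Lie 2-algebra morphism $\mu:C\to C'$ is a linear functor $(\mu_0,\mu_1)$ (object and morphism maps) with a skew-symmetric bilinear natural transformation $\mu_2(u,v):\mu_0[u,v]\to[\mu_0u,\mu_0v]$ such that for all objects $u,v,w$ the composites $\mu_0[[u,v],w]\xrightarrow{\mu_2([u,v],w)}[\mu_0[u,v],\mu_0w]\xrightarrow{[\mu_2(u,v),1]}[[\mu_0u,\mu_0v],\mu_0w]\xrightarrow{J}[\mu_0u,[\mu_0v,\mu_0w]]+[\mu_0v,[\mu_0w,\mu_0u]]$ and $\mu_0[[u,v],w]\xrightarrow{\mu_1J_{u,v,w}}\mu_0[u,[v,w]]+\mu_0[v,[w,u]]\xrightarrow{\mu_2(u,[v,w])+\mu_2(v,[w,u])}[\mu_0u,\mu_0[v,w]]+[\mu_0v,\mu_0[w,u]]\xrightarrow{[1,\mu_2(v,w)]+[1,\mu_2(w,u)]}[\mu_0u,[\mu_0v,\mu_0w]]+[\mu_0v,[\mu_0w,\mu_0u]]$ coincide; it is an isomorphism if $(\mu_0,\mu_1)$ is an isomorphism of 2-vector spaces. The twisted bracket on $\mathfrak{gl}(\mathbb V)\oplus\mathbb V$ is $\{A+\phi+u+m,B+\psi+v+n\}_\mu=[A+\phi,B+\psi]+\mu_1(A+\phi)(v+n)$ on morphisms and $\{A+u,B+v\}_\mu=[A,B]+\mu_0(A)(v)$ on objects. *)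

theory Defs
  imports "HOL-Analysis.Analysis"
begin

text \<open>Two-term complex d : V1 -> V0 with V0 = 'a, V1 = 'b finite-dimensional real spaces.
  Objects of gl(V): pairs (A0,A1); morphisms A + phi: pairs ((A0,A1), phi).\<close>

type_synonym ('a,'b) glob = "('a \<Rightarrow> 'a) \<times> ('b \<Rightarrow> 'b)"
type_synonym ('a,'b) glmor = "('a,'b) glob \<times> ('a \<Rightarrow> 'b)"

definition ob_add :: "('a::real_vector,'b::real_vector) glob \<Rightarrow> ('a,'b) glob \<Rightarrow> ('a,'b) glob" where
  "ob_add A B = ((\<lambda>x. fst A x + fst B x), (\<lambda>m. snd A m + snd B m))"
definition ob_scale :: "real \<Rightarrow> ('a::real_vector,'b::real_vector) glob \<Rightarrow> ('a,'b) glob" where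
  "ob_scale c A = ((\<lambda>x. c *\<^sub>R fst A x), (\<lambda>m. c *\<^sub>R snd A m))"

definition mor_add :: "('a::real_vector,'b::real_vector) glmor \<Rightarrow> ('a,'b) glmor \<Rightarrow> ('a,'b) glmor" where
  "mor_add f g = (ob_add (fst f) (fst g), (\<lambda>x. snd f x + snd g x))"
definition mor_scale :: "real \<Rightarrow> ('a::real_vector,'b::real_vector) glmor \<Rightarrow> ('a,'b) glmor" where
  "mor_scale c f = (ob_scale c (fst f), (\<lambda>x. c *\<^sub>R snd f x))"
definition mor_neg :: "('a::real_vector,'b::real_vector) glmor \<Rightarrow> ('a,'b) glmor" where
  "mor_neg f = mor_scale (-1) f"

definition gl_obj :: "('b::real_vector \<Rightarrow> 'a::real_vector) \<Rightarrow> ('a,'b) glob \<Rightarrow> bool" where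
  "gl_obj d A \<longleftrightarrow> linear (fst A) \<and> linear (snd A) \<and> fst A \<circ> d = d \<circ> snd A"

definition gl_mor :: "('b::real_vector \<Rightarrow> 'a::real_vector) \<Rightarrow> ('a,'b) glmor \<Rightarrow> bool" where
  "gl_mor d f \<longleftrightarrow> gl_obj d (fst f) \<and> linear (snd f)"

definition gl_src :: "('a,'b) glmor \<Rightarrow> ('a,'b) glob" where
  "gl_src f = fst f"

text \<open>t(A + phi) = A + delta phi, delta phi = (d phi, phi d)\<close>
definition gl_tgt :: "('b::real_vector \<Rightarrow> 'a::real_vector) \<Rightarrow> ('a,'b) glmor \<Rightarrow> ('a,'b) glob" where
  "gl_tgt d f = ((\<lambda>x. fst (fst f) x + d (snd f x)), (\<lambda>m. snd (fst f) m + snd f (d m)))"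

definition gl_id :: "('a::real_vector,'b::real_vector) glob \<Rightarrow> ('a,'b) glmor" where
  "gl_id A = (A, (\<lambda>_. 0))"

text \<open>Composition (A+phi).(A+delta phi+psi) = A+phi+psi (diagrammatic order: first f, then g).\<close>
definition gl_comp :: "('a::real_vector,'b::real_vector) glmor \<Rightarrow> ('a,'b) glmor \<Rightarrow> ('a,'b) glmor" where
  "gl_comp f g = (fst f, (\<lambda>x. snd f x + snd g x))"

definition gl_br :: "('a::real_vector,'b::real_vector) glob \<Rightarrow> ('a,'b) glob \<Rightarrow> ('a,'b) glob" where
  "gl_br A B = ((\<lambda>x. fst A (fst B x) - fst B (fst A x)), (\<lambda>m. snd A (snd B m) - snd B (snd A m)))"

text \<open>[A+phi,B+psi] = [A,B] + [phi,psi]_d + [A,psi] + [phi,B], with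
  [phi,psi]_d = phi d psi - psi d phi, [A,psi] = A1 psi - psi A0, [phi,B] = -(B1 phi - phi B0).\<close>
definition gl_br_mor :: "('b::real_vector \<Rightarrow> 'a::real_vector) \<Rightarrow> ('a,'b) glmor \<Rightarrow> ('a,'b) glmor \<Rightarrow> ('a,'b) glmor" where
  "gl_br_mor d f g = (gl_br (fst f) (fst g),
     (\<lambda>x. snd f (d (snd g x)) - snd g (d (snd f x))
         + (snd (fst f) (snd g x) - snd g (fst (fst f) x))
         - (snd (fst g) (snd f x) - snd f (fst (fst g) x))))"

text \<open>Morphisms of V are pairs (u,m) = u + m with s = u, t = u + d m.
  (A+phi)(u+m) = A0 u + (A1 m + phi(u + d m)).\<close>
definition act_mor :: "('b::real_vector \<Rightarrow> 'a::real_vector) \<Rightarrow> ('a,'b) glmor \<Rightarrow> 'a \<times> 'b \<Rightarrow> 'a \<times> 'b" where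
  "act_mor d f um = (fst (fst f) (fst um), snd (fst f) (snd um) + snd f (fst um + d (snd um)))"

definition lie2_iso_gl ::
  "('b::real_vector \<Rightarrow> 'a::real_vector) \<Rightarrow> (('a,'b) glob \<Rightarrow> ('a,'b) glob) \<Rightarrow> (('a,'b) glmor \<Rightarrow> ('a,'b) glmor)
     \<Rightarrow> (('a,'b) glob \<Rightarrow> ('a,'b) glob \<Rightarrow> ('a,'b) glmor) \<Rightarrow> bool" where
  "lie2_iso_gl d \<mu>0 \<mu>1 \<mu>2 \<longleftrightarrow>
     \<comment> \<open>(mu0, mu1) linear functor\<close>
     (\<forall>A. gl_obj d A \<longrightarrow> gl_obj d (\<mu>0 A)) \<and>
     (\<forall>f. gl_mor d f \<longrightarrow> gl_mor d (\<mu>1 f)) \<and>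
     (\<forall>A B. gl_obj d A \<longrightarrow> gl_obj d B \<longrightarrow> \<mu>0 (ob_add A B) = ob_add (\<mu>0 A) (\<mu>0 B)) \<and>
     (\<forall>c A. gl_obj d A \<longrightarrow> \<mu>0 (ob_scale c A) = ob_scale c (\<mu>0 A)) \<and>
     (\<forall>f g. gl_mor d f \<longrightarrow> gl_mor d g \<longrightarrow> \<mu>1 (mor_add f g) = mor_add (\<mu>1 f) (\<mu>1 g)) \<and>
     (\<forall>c f. gl_mor d f \<longrightarrow> \<mu>1 (mor_scale c f) = mor_scale c (\<mu>1 f)) \<and>
     (\<forall>f. gl_mor d f \<longrightarrow> gl_src (\<mu>1 f) = \<mu>0 (gl_src f)) \<and>
     (\<forall>f. gl_mor d f \<longrightarrow> gl_tgt d (\<mu>1 f) = \<mu>0 (gl_tgt d f)) \<and>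
     (\<forall>A. gl_obj d A \<longrightarrow> \<mu>1 (gl_id A) = gl_id (\<mu>0 A)) \<and>
     (\<forall>f g. gl_mor d f \<longrightarrow> gl_mor d g \<longrightarrow> gl_tgt d f = gl_src g \<longrightarrow>
            \<mu>1 (gl_comp f g) = gl_comp (\<mu>1 f) (\<mu>1 g)) \<and>
     \<comment> \<open>mu2(A,B) : mu0[A,B] -> [mu0 A, mu0 B]\<close>
     (\<forall>A B. gl_obj d A \<longrightarrow> gl_obj d B \<longrightarrow>
        gl_mor d (\<mu>2 A B) \<and> gl_src (\<mu>2 A B) = \<mu>0 (gl_br A B) \<and>
        gl_tgt d (\<mu>2 A B) = gl_br (\<mu>0 A) (\<mu>0 B)) \<and>
     \<comment> \<open>skew-symmetric\<close>
     (\<forall>A B. gl_obj d A \<longrightarrow> gl_obj d B \<longrightarrow> \<mu>2 B A = mor_neg (\<mu>2 A B)) \<and>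
     \<comment> \<open>bilinear\<close>
     (\<forall>A A' B. gl_obj d A \<longrightarrow> gl_obj d A' \<longrightarrow> gl_obj d B \<longrightarrow>
        \<mu>2 (ob_add A A') B = mor_add (\<mu>2 A B) (\<mu>2 A' B)) \<and>
     (\<forall>c A B. gl_obj d A \<longrightarrow> gl_obj d B \<longrightarrow> \<mu>2 (ob_scale c A) B = mor_scale c (\<mu>2 A B)) \<and>
     (\<forall>A B B'. gl_obj d A \<longrightarrow> gl_obj d B \<longrightarrow> gl_obj d B' \<longrightarrow>
        \<mu>2 A (ob_add B B') = mor_add (\<mu>2 A B) (\<mu>2 A B')) \<and>
     (\<forall>c A B. gl_obj d A \<longrightarrow> gl_obj d B \<longrightarrow> \<mu>2 A (ob_scale c B) = mor_scale c (\<mu>2 A B)) \<and>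
     \<comment> \<open>natural: mu1[f,g] then mu2(t f, t g) equals mu2(s f, s g) then [mu1 f, mu1 g]\<close>
     (\<forall>f g. gl_mor d f \<longrightarrow> gl_mor d g \<longrightarrow>
        gl_comp (\<mu>1 (gl_br_mor d f g)) (\<mu>2 (gl_tgt d f) (gl_tgt d g)) =
        gl_comp (\<mu>2 (gl_src f) (gl_src g)) (gl_br_mor d (\<mu>1 f) (\<mu>1 g))) \<and>
     \<comment> \<open>coherence with the (identity) Jacobiators of the strict Lie 2-algebra gl(V)\<close>
     (\<forall>A B C. gl_obj d A \<longrightarrow> gl_obj d B \<longrightarrow> gl_obj d C \<longrightarrow>
        gl_comp (gl_comp (\<mu>2 (gl_br A B) C) (gl_br_mor d (\<mu>2 A B) (gl_id (\<mu>0 C))))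
                (gl_id (gl_br (gl_br (\<mu>0 A) (\<mu>0 B)) (\<mu>0 C)))
        =
        gl_comp (gl_comp (\<mu>1 (gl_id (gl_br (gl_br A B) C)))
                         (mor_add (\<mu>2 A (gl_br B C)) (\<mu>2 B (gl_br C A))))
                (mor_add (gl_br_mor d (gl_id (\<mu>0 A)) (\<mu>2 B C))
                         (gl_br_mor d (gl_id (\<mu>0 B)) (\<mu>2 C A)))) \<and>
     \<comment> \<open>isomorphism of 2-vector spaces\<close>
     bij_betw \<mu>0 {A. gl_obj d A} {A. gl_obj d A} \<and>
     bij_betw \<mu>1 {f. gl_mor d f} {f. gl_mor d f}"

text \<open>Objects: (A,u) = A + u; morphisms: (f,(u,m)) = (A+phi) + (u+m).\<close>

definition sv_obj :: "('b::real_vector \<Rightarrow> 'a::real_vector) \<Rightarrow> ('a,'b) glob \<times> 'a \<Rightarrow> bool" where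
  "sv_obj d e \<longleftrightarrow> gl_obj d (fst e)"
definition sv_mor :: "('b::real_vector \<Rightarrow> 'a::real_vector) \<Rightarrow> ('a,'b) glmor \<times> ('a \<times> 'b) \<Rightarrow> bool" where
  "sv_mor d f \<longleftrightarrow> gl_mor d (fst f)"
definition sv_src :: "('a,'b) glmor \<times> ('a \<times> 'b) \<Rightarrow> ('a,'b) glob \<times> 'a" where
  "sv_src f = (gl_src (fst f), fst (snd f))"
definition sv_tgt :: "('b::real_vector \<Rightarrow> 'a::real_vector) \<Rightarrow> ('a,'b) glmor \<times> ('a \<times> 'b) \<Rightarrow> ('a,'b) glob \<times> 'a" where
  "sv_tgt d f = (gl_tgt d (fst f), fst (snd f) + d (snd (snd f)))"
definition sv_comp :: "('a::real_vector,'b::real_vector) glmor \<times> ('a \<times> 'b) \<Rightarrow> ('a,'b) glmor \<times> ('a \<times> 'b) \<Rightarrow> ('a,'b) glmor \<times> ('a \<times> 'b)" where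
  "sv_comp f g = (gl_comp (fst f) (fst g), (fst (snd f), snd (snd f) + snd (snd g)))"
definition sv_obj_diff :: "('a::real_vector,'b::real_vector) glob \<times> 'a \<Rightarrow> ('a,'b) glob \<times> 'a \<Rightarrow> ('a,'b) glob \<times> 'a" where
  "sv_obj_diff e e' = (ob_add (fst e) (ob_scale (-1) (fst e')), snd e - snd e')"
definition sv_mor_diff :: "('a::real_vector,'b::real_vector) glmor \<times> ('a \<times> 'b) \<Rightarrow> ('a,'b) glmor \<times> ('a \<times> 'b) \<Rightarrow> ('a,'b) glmor \<times> ('a \<times> 'b)" where
  "sv_mor_diff f g = (mor_add (fst f) (mor_neg (fst g)), snd f - snd g)"

text \<open>{A+u, B+v}_mu = [A,B] + mu0(A)(v)\<close>
definition tw_obj :: "(('a,'b) glob \<Rightarrow> ('a,'b) glob) \<Rightarrow> ('a::real_vector,'b::real_vector) glob \<times> 'a \<Rightarrow> ('a,'b) glob \<times> 'a \<Rightarrow> ('a,'b) glob \<times> 'a" where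
  "tw_obj \<mu>0 e1 e2 = (gl_br (fst e1) (fst e2), fst (\<mu>0 (fst e1)) (snd e2))"

text \<open>{A+phi+u+m, B+psi+v+n}_mu = [A+phi,B+psi] + mu1(A+phi)(v+n)\<close>
definition tw_mor :: "('b::real_vector \<Rightarrow> 'a::real_vector) \<Rightarrow> (('a,'b) glmor \<Rightarrow> ('a,'b) glmor)
    \<Rightarrow> ('a,'b) glmor \<times> ('a \<times> 'b) \<Rightarrow> ('a,'b) glmor \<times> ('a \<times> 'b) \<Rightarrow> ('a,'b) glmor \<times> ('a \<times> 'b)" where
  "tw_mor d \<mu>1 f1 f2 = (gl_br_mor d (fst f1) (fst f2), act_mor d (\<mu>1 (fst f1)) (snd f2))"

definition Jmu :: "('b::real_vector \<Rightarrow> 'a::real_vector) \<Rightarrow> (('a,'b) glob \<Rightarrow> ('a,'b) glob \<Rightarrow> ('a,'b) glmor)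
    \<Rightarrow> ('a,'b) glob \<times> 'a \<Rightarrow> ('a,'b) glob \<times> 'a \<Rightarrow> ('a,'b) glob \<times> 'a \<Rightarrow> ('a,'b) glmor \<times> ('a \<times> 'b)" where
  "Jmu d \<mu>2 e1 e2 e3 = (gl_id (gl_br (gl_br (fst e1) (fst e2)) (fst e3)), act_mor d (\<mu>2 (fst e1) (fst e2)) (snd e3, 0))"

end

theory Submission
  imports Defs
begin

lemma comm_pt: "gl_obj d A \<Longrightarrow> fst A (d x) = d (snd A x)"
  unfolding gl_obj_def by (auto simp: fun_eq_iff)

lemma lin_br: "linear f \<Longrightarrow> linear g \<Longrightarrow> linear (\<lambda>x. f (g x) - g (f x))"
  unfolding linear_iff by (simp add: linear_add linear_scale scaleR_diff_right)

lemma gl_objD: "gl_obj d A \<Longrightarrow> linear (fst A)" "gl_obj d A \<Longrightarrow> linear (snd A)"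
  unfolding gl_obj_def by auto

lemma gl_morD: "gl_mor d F \<Longrightarrow> gl_obj d (fst F)" "gl_mor d F \<Longrightarrow> linear (snd F)"
  unfolding gl_mor_def by auto

lemma gl_obj_br:
  assumes "gl_obj d A" "gl_obj d B" "linear d"
  shows "gl_obj d (gl_br A B)"
proof -
  note l = gl_objD[OF assms(1)] gl_objD[OF assms(2)]
  have "fst (gl_br A B) (d x) = d (snd (gl_br A B) x)" for x
    using assms(3) l by (simp add: gl_br_def comm_pt[OF assms(1)] comm_pt[OF assms(2)] linear_diff)
  then show ?thesis using l unfolding gl_obj_def gl_br_def by (auto simp: fun_eq_iff intro!: lin_br)
qed

lemma gl_obj_tgt:
  assumes "gl_mor d F" "linear d"
  shows "gl_obj d (gl_tgt d F)"
proof -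
  note o = gl_morD[OF assms(1)]
  note l = gl_objD[OF o(1)] o(2)
  have "fst (gl_tgt d F) (d x) = d (snd (gl_tgt d F) x)" for x
    using assms(2) l by (simp add: gl_tgt_def comm_pt[OF o(1)] linear_add)
  moreover have "linear (fst (gl_tgt d F))" "linear (snd (gl_tgt d F))"
    using assms(2) l unfolding gl_tgt_def linear_iff
    by (simp_all add: linear_add linear_scale scaleR_add_right)
  ultimately show ?thesis unfolding gl_obj_def by (auto simp: fun_eq_iff)
qed

lemma gl_mor_br:
  assumes "gl_mor d F" "gl_mor d G" "linear d"
  shows "gl_mor d (gl_br_mor d F G)"
proof -
  note o = gl_morD[OF assms(1)] gl_morD[OF assms(2)]
  note l = gl_objD[OF o(1)] o(2) gl_objD[OF o(3)] o(4)
  have "linear (snd (gl_br_mor d F G))"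
    using assms(3) l unfolding gl_br_mor_def linear_iff
    by (simp add: linear_add linear_scale algebra_simps)
  then show ?thesis using gl_obj_br[OF o(1) o(3) assms(3)] unfolding gl_mor_def gl_br_mor_def by simp
qed

lemma tgt_br:
  assumes "gl_mor d F" "gl_mor d G" "linear d"
  shows "gl_tgt d (gl_br_mor d F G) = gl_br (gl_tgt d F) (gl_tgt d G)"
proof -
  note o = gl_morD[OF assms(1)] gl_morD[OF assms(2)]
  note l = gl_objD[OF o(1)] o(2) gl_objD[OF o(3)] o(4)
  note ld = linear_add[OF assms(3)] linear_diff[OF assms(3)]
  show ?thesis
    unfolding gl_tgt_def gl_br_mor_def gl_br_def
    by (simp add: fun_eq_iff ld linear_add[OF l(1)] linear_add[OF l(2)] linear_add[OF l(3)] linear_add[OF l(4)]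
       linear_add[OF l(5)] linear_add[OF l(6)] comm_pt[OF o(1)] comm_pt[OF o(3)] algebra_simps)
qed

lemma ob_jacobi:
  assumes "gl_obj d A" "gl_obj d B" "gl_obj d C"
  shows "gl_br (gl_br A B) C = ob_add (gl_br A (gl_br B C)) (ob_scale (-1) (gl_br B (gl_br A C)))"
proof -
  note l = gl_objD[OF assms(1)] gl_objD[OF assms(2)] gl_objD[OF assms(3)]
  show ?thesis
    unfolding gl_br_def ob_add_def ob_scale_def
    by (simp add: fun_eq_iff linear_diff[OF l(1)] linear_diff[OF l(2)] linear_diff[OF l(3)]
       linear_diff[OF l(4)] linear_diff[OF l(5)] linear_diff[OF l(6)] algebra_simps)
qed

lemma mor_jacobi:
  assumes "gl_mor d F" "gl_mor d G" "gl_mor d H" "linear d"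
  shows "snd (gl_br_mor d (gl_br_mor d F G) H) x =
     snd (gl_br_mor d F (gl_br_mor d G H)) x + (-1) *\<^sub>R snd (gl_br_mor d G (gl_br_mor d F H)) x"
proof -
  note o = gl_morD[OF assms(1)] gl_morD[OF assms(2)] gl_morD[OF assms(3)]
  note l = gl_objD[OF o(1)] o(2) gl_objD[OF o(3)] o(4) gl_objD[OF o(5)] o(6)
  note ld = linear_add[OF assms(4)] linear_diff[OF assms(4)]
  show ?thesis
    unfolding gl_br_mor_def gl_br_def
    by (simp add: ld linear_add[OF l(1)] linear_add[OF l(2)] linear_add[OF l(3)] linear_add[OF l(4)]
       linear_add[OF l(5)] linear_add[OF l(6)] linear_add[OF l(7)] linear_add[OF l(8)] linear_add[OF l(9)]
       linear_diff[OF l(1)] linear_diff[OF l(2)] linear_diff[OF l(3)] linear_diff[OF l(4)]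
       linear_diff[OF l(5)] linear_diff[OF l(6)] linear_diff[OF l(7)] linear_diff[OF l(8)] linear_diff[OF l(9)]
       comm_pt[OF o(1)] comm_pt[OF o(3)] comm_pt[OF o(5)] algebra_simps)
qed

theorem mainTheorem13:
  fixes d :: "'b::euclidean_space \<Rightarrow> 'a::euclidean_space"
    and \<mu>0 :: "('a,'b) glob \<Rightarrow> ('a,'b) glob"
    and \<mu>1 :: "('a,'b) glmor \<Rightarrow> ('a,'b) glmor"
    and \<mu>2 :: "('a,'b) glob \<Rightarrow> ('a,'b) glob \<Rightarrow> ('a,'b) glmor"
  assumes "linear d"
    and "lie2_iso_gl d \<mu>0 \<mu>1 \<mu>2"
  shows "(\<forall>e1 e2 e3. sv_obj d e1 \<longrightarrow> sv_obj d e2 \<longrightarrow> sv_obj d e3 \<longrightarrow>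
            sv_mor d (Jmu d \<mu>2 e1 e2 e3) \<and>
            sv_src (Jmu d \<mu>2 e1 e2 e3) = tw_obj \<mu>0 (tw_obj \<mu>0 e1 e2) e3 \<and>
            sv_tgt d (Jmu d \<mu>2 e1 e2 e3) =
              sv_obj_diff (tw_obj \<mu>0 e1 (tw_obj \<mu>0 e2 e3)) (tw_obj \<mu>0 e2 (tw_obj \<mu>0 e1 e3)))
       \<and>
       (\<forall>f1 f2 f3. sv_mor d f1 \<longrightarrow> sv_mor d f2 \<longrightarrow> sv_mor d f3 \<longrightarrow>
          sv_tgt d (tw_mor d \<mu>1 (tw_mor d \<mu>1 f1 f2) f3) = sv_src (Jmu d \<mu>2 (sv_tgt d f1) (sv_tgt d f2) (sv_tgt d f3)) \<and>
          sv_tgt d (Jmu d \<mu>2 (sv_src f1) (sv_src f2) (sv_src f3)) =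
            sv_src (sv_mor_diff (tw_mor d \<mu>1 f1 (tw_mor d \<mu>1 f2 f3)) (tw_mor d \<mu>1 f2 (tw_mor d \<mu>1 f1 f3))) \<and>
          sv_comp (tw_mor d \<mu>1 (tw_mor d \<mu>1 f1 f2) f3) (Jmu d \<mu>2 (sv_tgt d f1) (sv_tgt d f2) (sv_tgt d f3)) =
          sv_comp (Jmu d \<mu>2 (sv_src f1) (sv_src f2) (sv_src f3))
                  (sv_mor_diff (tw_mor d \<mu>1 f1 (tw_mor d \<mu>1 f2 f3)) (tw_mor d \<mu>1 f2 (tw_mor d \<mu>1 f1 f3))))"
proof -
  note ld = assms(1)
  have d0: "d 0 = 0" using linear_0[OF ld] .
  note H = assms(2)[unfolded lie2_iso_gl_def]
  have mu0_obj: "\<And>A. gl_obj d A \<Longrightarrow> gl_obj d (\<mu>0 A)" using H[THEN conjunct1] by blast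
  have mu1_mor: "\<And>f. gl_mor d f \<Longrightarrow> gl_mor d (\<mu>1 f)" using H[THEN conjunct2, THEN conjunct1] by blast
  have mu1_src: "\<And>f. gl_mor d f \<Longrightarrow> gl_src (\<mu>1 f) = \<mu>0 (gl_src f)" using H[THEN conjunct2, THEN conjunct2, THEN conjunct2, THEN conjunct2, THEN conjunct2, THEN conjunct2, THEN conjunct1] by blast
  have mu1_tgt: "\<And>f. gl_mor d f \<Longrightarrow> gl_tgt d (\<mu>1 f) = \<mu>0 (gl_tgt d f)" using H[THEN conjunct2, THEN conjunct2, THEN conjunct2, THEN conjunct2, THEN conjunct2, THEN conjunct2, THEN conjunct2, THEN conjunct1] by blast
  have mu2: "\<And>A B. gl_obj d A \<Longrightarrow> gl_obj d B \<Longrightarrow>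
        gl_mor d (\<mu>2 A B) \<and> gl_src (\<mu>2 A B) = \<mu>0 (gl_br A B) \<and>
        gl_tgt d (\<mu>2 A B) = gl_br (\<mu>0 A) (\<mu>0 B)" using H[THEN conjunct2, THEN conjunct2, THEN conjunct2, THEN conjunct2, THEN conjunct2, THEN conjunct2, THEN conjunct2, THEN conjunct2, THEN conjunct2, THEN conjunct2, THEN conjunct1] by blast
  have nat: "\<And>f g. gl_mor d f \<Longrightarrow> gl_mor d g \<Longrightarrow>
        gl_comp (\<mu>1 (gl_br_mor d f g)) (\<mu>2 (gl_tgt d f) (gl_tgt d g)) =
        gl_comp (\<mu>2 (gl_src f) (gl_src g)) (gl_br_mor d (\<mu>1 f) (\<mu>1 g))" using H[THEN conjunct2, THEN conjunct2, THEN conjunct2, THEN conjunct2, THEN conjunct2, THEN conjunct2, THEN conjunct2, THEN conjunct2, THEN conjunct2, THEN conjunct2, THEN conjunct2, THEN conjunct2, THEN conjunct2, THEN conjunct2, THEN conjunct2, THEN conjunct2, THEN conjunct1] by blast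
  have lin0: "linear (\<lambda>_::'a. 0::'b)" by (simp add: linear_iff)
  have P1: "sv_mor d (Jmu d \<mu>2 e1 e2 e3) \<and>
            sv_src (Jmu d \<mu>2 e1 e2 e3) = tw_obj \<mu>0 (tw_obj \<mu>0 e1 e2) e3 \<and>
            sv_tgt d (Jmu d \<mu>2 e1 e2 e3) =
              sv_obj_diff (tw_obj \<mu>0 e1 (tw_obj \<mu>0 e2 e3)) (tw_obj \<mu>0 e2 (tw_obj \<mu>0 e1 e3))"
    if "sv_obj d e1" "sv_obj d e2" "sv_obj d e3" for e1 e2 e3
  proof -
    obtain A u where e1: "e1 = (A, u)" by (cases e1)
    obtain B v where e2: "e2 = (B, v)" by (cases e2)
    obtain C w where e3: "e3 = (C, w)" by (cases e3)
    have oA: "gl_obj d A" and oB: "gl_obj d B" and oC: "gl_obj d C"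
      using that e1 e2 e3 by (auto simp: sv_obj_def)
    have oX: "gl_obj d (gl_br (gl_br A B) C)"
      by (intro gl_obj_br oA oB oC ld)
    obtain P where P: "P = \<mu>2 A B" by simp
    have mP: "gl_mor d P" and sP: "fst P = \<mu>0 (gl_br A B)" and tP: "gl_tgt d P = gl_br (\<mu>0 A) (\<mu>0 B)"
      using mu2[OF oA oB] P by (auto simp: gl_src_def)
    have lP: "linear (snd (fst P))" using gl_objD(2)[OF gl_morD(1)[OF mP]] .
    have tP0: "fst (fst P) x + d (snd P x) = fst (\<mu>0 A) (fst (\<mu>0 B) x) - fst (\<mu>0 B) (fst (\<mu>0 A) x)" for x
      using arg_cong[OF tP, of "\<lambda>z. fst z x"] by (simp add: gl_tgt_def gl_br_def)
    show ?thesis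
    proof (intro conjI)
      show "sv_mor d (Jmu d \<mu>2 e1 e2 e3)"
        using oX lin0 by (simp add: e1 e2 e3 Jmu_def sv_mor_def gl_mor_def gl_id_def)
      show "sv_src (Jmu d \<mu>2 e1 e2 e3) = tw_obj \<mu>0 (tw_obj \<mu>0 e1 e2) e3"
        by (simp add: e1 e2 e3 Jmu_def sv_src_def gl_src_def gl_id_def tw_obj_def act_mor_def P[symmetric] sP)
      show "sv_tgt d (Jmu d \<mu>2 e1 e2 e3) =
              sv_obj_diff (tw_obj \<mu>0 e1 (tw_obj \<mu>0 e2 e3)) (tw_obj \<mu>0 e2 (tw_obj \<mu>0 e1 e3))"
        using ob_jacobi[OF oA oB oC]
        by (simp add: e1 e2 e3 Jmu_def sv_tgt_def gl_tgt_def gl_id_def tw_obj_def act_mor_def sv_obj_diff_def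
             P[symmetric] d0 linear_0[OF lP] tP0)
    qed
  qed
  have P2: "sv_tgt d (tw_mor d \<mu>1 (tw_mor d \<mu>1 f1 f2) f3) = sv_src (Jmu d \<mu>2 (sv_tgt d f1) (sv_tgt d f2) (sv_tgt d f3)) \<and>
          sv_tgt d (Jmu d \<mu>2 (sv_src f1) (sv_src f2) (sv_src f3)) =
            sv_src (sv_mor_diff (tw_mor d \<mu>1 f1 (tw_mor d \<mu>1 f2 f3)) (tw_mor d \<mu>1 f2 (tw_mor d \<mu>1 f1 f3))) \<and>
          sv_comp (tw_mor d \<mu>1 (tw_mor d \<mu>1 f1 f2) f3) (Jmu d \<mu>2 (sv_tgt d f1) (sv_tgt d f2) (sv_tgt d f3)) =
          sv_comp (Jmu d \<mu>2 (sv_src f1) (sv_src f2) (sv_src f3))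
                  (sv_mor_diff (tw_mor d \<mu>1 f1 (tw_mor d \<mu>1 f2 f3)) (tw_mor d \<mu>1 f2 (tw_mor d \<mu>1 f1 f3)))"
    if "sv_mor d f1" "sv_mor d f2" "sv_mor d f3" for f1 f2 f3
  proof -
    obtain F1 u1 m1 where f1: "f1 = (F1, (u1, m1))" by (cases f1) auto
    obtain F2 u2 m2 where f2: "f2 = (F2, (u2, m2))" by (cases f2) auto
    obtain F3 u3 m3 where f3: "f3 = (F3, (u3, m3))" by (cases f3) auto
    have m1: "gl_mor d F1" and m2: "gl_mor d F2" and m3: "gl_mor d F3"
      using that f1 f2 f3 by (auto simp: sv_mor_def)
    have oA1: "gl_obj d (fst F1)" and oA2: "gl_obj d (fst F2)" and oA3: "gl_obj d (fst F3)"
      using m1 m2 m3 by (auto dest: gl_morD)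
    have oT1: "gl_obj d (gl_tgt d F1)" and oT2: "gl_obj d (gl_tgt d F2)" and oT3: "gl_obj d (gl_tgt d F3)"
      using m1 m2 m3 ld by (auto intro: gl_obj_tgt)
    have m12: "gl_mor d (gl_br_mor d F1 F2)" using gl_mor_br[OF m1 m2 ld] .
    have tgt12: "gl_tgt d (gl_br_mor d F1 F2) = gl_br (gl_tgt d F1) (gl_tgt d F2)" using tgt_br[OF m1 m2 ld] .
    have a: "sv_tgt d (tw_mor d \<mu>1 (tw_mor d \<mu>1 f1 f2) f3) = sv_src (Jmu d \<mu>2 (sv_tgt d f1) (sv_tgt d f2) (sv_tgt d f3))"
    proof -
      define G where "G = \<mu>1 (gl_br_mor d F1 F2)"
      have mG: "gl_mor d G" using mu1_mor[OF m12] G_def by simp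
      have tG: "gl_tgt d G = \<mu>0 (gl_br (gl_tgt d F1) (gl_tgt d F2))"
        using mu1_tgt[OF m12] tgt12 G_def by simp
      have cG: "fst (fst G) (d x) = d (snd (fst G) x)" for x using comm_pt[OF gl_morD(1)[OF mG]] .
      have sT: "fst (\<mu>2 (gl_tgt d F1) (gl_tgt d F2)) = \<mu>0 (gl_br (gl_tgt d F1) (gl_tgt d F2))"
        using mu2[OF oT1 oT2] by (simp add: gl_src_def)
      have e: "fst (fst G) u + d (snd (fst G) m + snd G (u + d m)) = fst (gl_tgt d G) (u + d m)" for u m
        by (simp add: gl_tgt_def linear_add[OF ld] linear_add[OF gl_objD(1)[OF gl_morD(1)[OF mG]]] cG add.assoc)
      show ?thesis
        using tgt_br[OF m12 m3 ld] tgt12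
        by (simp add: f1 f2 f3 tw_mor_def sv_tgt_def sv_src_def Jmu_def gl_id_def gl_src_def act_mor_def
             G_def[symmetric] e tG sT)
    qed
    have b: "sv_tgt d (Jmu d \<mu>2 (sv_src f1) (sv_src f2) (sv_src f3)) =
            sv_src (sv_mor_diff (tw_mor d \<mu>1 f1 (tw_mor d \<mu>1 f2 f3)) (tw_mor d \<mu>1 f2 (tw_mor d \<mu>1 f1 f3)))"
    proof -
      have "sv_tgt d (Jmu d \<mu>2 (sv_src f1) (sv_src f2) (sv_src f3)) =
          sv_obj_diff (tw_obj \<mu>0 (sv_src f1) (tw_obj \<mu>0 (sv_src f2) (sv_src f3))) (tw_obj \<mu>0 (sv_src f2) (tw_obj \<mu>0 (sv_src f1) (sv_src f3)))"
        using P1[of "sv_src f1" "sv_src f2" "sv_src f3"] oA1 oA2 oA3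
        by (simp add: f1 f2 f3 sv_obj_def sv_src_def gl_src_def)
      also have "\<dots> = sv_src (sv_mor_diff (tw_mor d \<mu>1 f1 (tw_mor d \<mu>1 f2 f3)) (tw_mor d \<mu>1 f2 (tw_mor d \<mu>1 f1 f3)))"
        using mu1_src[OF m1] mu1_src[OF m2]
        by (simp add: f1 f2 f3 sv_obj_diff_def tw_obj_def sv_src_def sv_mor_diff_def tw_mor_def gl_src_def
             mor_add_def mor_neg_def mor_scale_def gl_br_mor_def act_mor_def)
      finally show ?thesis .
    qed
    have c: "sv_comp (tw_mor d \<mu>1 (tw_mor d \<mu>1 f1 f2) f3) (Jmu d \<mu>2 (sv_tgt d f1) (sv_tgt d f2) (sv_tgt d f3)) =
          sv_comp (Jmu d \<mu>2 (sv_src f1) (sv_src f2) (sv_src f3))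
                  (sv_mor_diff (tw_mor d \<mu>1 f1 (tw_mor d \<mu>1 f2 f3)) (tw_mor d \<mu>1 f2 (tw_mor d \<mu>1 f1 f3)))"
    proof -
      define G where "G = \<mu>1 (gl_br_mor d F1 F2)"
      define Q where "Q = \<mu>2 (gl_tgt d F1) (gl_tgt d F2)"
      define P where "P = \<mu>2 (fst F1) (fst F2)"
      define M1 where "M1 = \<mu>1 F1"
      define M2 where "M2 = \<mu>1 F2"
      have mG: "gl_mor d G" using mu1_mor[OF m12] G_def by simp
      have mQ: "gl_mor d Q" using mu2[OF oT1 oT2] Q_def by simp
      have mP: "gl_mor d P" using mu2[OF oA1 oA2] P_def by simp
      have mM1: "gl_mor d M1" using mu1_mor[OF m1] M1_def by simp
      have mM2: "gl_mor d M2" using mu1_mor[OF m2] M2_def by simp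
      have fG: "fst G = \<mu>0 (gl_br (fst F1) (fst F2))"
        using mu1_src[OF m12] G_def by (simp add: gl_src_def gl_br_mor_def)
      have fP: "fst P = \<mu>0 (gl_br (fst F1) (fst F2))"
        using mu2[OF oA1 oA2] P_def by (simp add: gl_src_def)
      have fM1: "fst M1 = \<mu>0 (fst F1)" using mu1_src[OF m1] M1_def by (simp add: gl_src_def)
      have fM2: "fst M2 = \<mu>0 (fst F2)" using mu1_src[OF m2] M2_def by (simp add: gl_src_def)
      have o1: "gl_obj d (\<mu>0 (fst F1))" using mu0_obj[OF oA1] .
      have o2: "gl_obj d (\<mu>0 (fst F2))" using mu0_obj[OF oA2] .
      have nat': "snd G x + snd Q x = snd P x + (snd M1 (d (snd M2 x)) - snd M2 (d (snd M1 x))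
         + (snd (fst M1) (snd M2 x) - snd M2 (fst (fst M1) x))
         - (snd (fst M2) (snd M1 x) - snd M1 (fst (fst M2) x)))" for x
        using arg_cong[OF nat[OF m1 m2], of "\<lambda>z. snd z x"]
        by (simp add: G_def Q_def P_def M1_def M2_def gl_comp_def gl_src_def gl_br_mor_def)
      have tP: "snd (fst P) m + snd P (d m) = snd (\<mu>0 (fst F1)) (snd (\<mu>0 (fst F2)) m) - snd (\<mu>0 (fst F2)) (snd (\<mu>0 (fst F1)) m)" for m
        using arg_cong[OF conjunct2[OF conjunct2[OF mu2[OF oA1 oA2]]], of "\<lambda>z. snd z m"]
        by (simp add: P_def gl_tgt_def gl_br_def)
      have Q0: "snd (fst Q) 0 = 0" using linear_0[OF gl_objD(2)[OF gl_morD(1)[OF mQ]]] .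
      have P0: "snd (fst P) 0 = 0" using linear_0[OF gl_objD(2)[OF gl_morD(1)[OF mP]]] .
      note lP = gl_morD(2)[OF mP] and lM1 = gl_morD(2)[OF mM1] and lM2 = gl_morD(2)[OF mM2]
        and lG = gl_morD(2)[OF mG] and lQ = gl_morD(2)[OF mQ]
      note l1 = gl_objD[OF o1] and l2 = gl_objD[OF o2]
      have J: "(\<lambda>x. snd (gl_br_mor d (gl_br_mor d F1 F2) F3) x + 0) =
           (\<lambda>x. 0 + snd (mor_add (gl_br_mor d F1 (gl_br_mor d F2 F3)) (mor_neg (gl_br_mor d F2 (gl_br_mor d F1 F3)))) x)"
        using mor_jacobi[OF m1 m2 m3 ld] by (simp add: fun_eq_iff mor_add_def mor_neg_def mor_scale_def)
      have s1: "fst (gl_br_mor d (gl_br_mor d F1 F2) F3) = gl_br (gl_br (fst F1) (fst F2)) (fst F3)"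
        by (simp add: gl_br_mor_def)
      show ?thesis
        apply (simp add: f1 f2 f3 tw_mor_def sv_tgt_def sv_src_def Jmu_def gl_id_def gl_src_def sv_comp_def
             sv_mor_diff_def gl_comp_def)
        apply (simp add: G_def[symmetric] Q_def[symmetric] P_def[symmetric] M1_def[symmetric] M2_def[symmetric])
        apply (intro conjI)
        subgoal using J s1 by (simp add: prod_eq_iff fun_eq_iff)
        subgoal by (simp add: act_mor_def fG fP)
        subgoal
        proof -
          have e1: "snd G (u3 + d m3) = snd P (u3 + d m3) + (snd M1 (d (snd M2 (u3 + d m3))) - snd M2 (d (snd M1 (u3 + d m3)))
             + (snd (fst M1) (snd M2 (u3 + d m3)) - snd M2 (fst (fst M1) (u3 + d m3)))
             - (snd (fst M2) (snd M1 (u3 + d m3)) - snd M1 (fst (fst M2) (u3 + d m3)))) - snd Q (u3 + d m3)"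
            using nat'[of "u3 + d m3"] by (simp add: eq_diff_eq)
          have e2: "snd P (d m) = snd (\<mu>0 (fst F1)) (snd (\<mu>0 (fst F2)) m) - snd (\<mu>0 (fst F2)) (snd (\<mu>0 (fst F1)) m) - snd (fst P) m" for m
            using tP[of m] by (simp add: eq_diff_eq add.commute)
          show ?thesis
            unfolding act_mor_def
            by (simp add: e1 fG fP fM1 fM2 Q0 P0 P0[unfolded fP] d0 linear_add[OF ld] linear_diff[OF ld]
               linear_add[OF lP] e2 linear_add[OF lM1] linear_diff[OF lM1] linear_add[OF lM2] linear_diff[OF lM2]
               linear_add[OF l1(1)] linear_add[OF l1(2)] linear_add[OF l2(1)] linear_add[OF l2(2)]
               comm_pt[OF o1] comm_pt[OF o2] algebra_simps)
        qed
        done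
    qed
    show ?thesis using a b c by blast
  qed
  show ?thesis using P1 P2 by blast
qed

end
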